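(* Let $\Sigma=\{b\}$. There exists a 2R1CA over $\Sigma$ which accepts every input $b^{2^n}$ ($n\ge0$) with probability $1$ and rejects every other input $x\in\Sigma^*$ with probability $1$.
   Context: Let $\Gamma=\Sigma\cup\{\cent,\$\}$ with end-markers $\cent,\$\notin\Sigma$, $S=\{0,1\}$, $\mathrm{sign}(k)=0$ if $k=0$ and $1$ otherwise, and $\mu(\leftarrow)=-1,\mu(\downarrow)=0,\mu(\rightarrow)=+1$. 2Q1CA: $M=(Q,\Sigma,\delta,q_0,Q_{\rm acc},Q_{\rm rej})$ with finite $Q$, $q_0\in Q$, disjoint $Q_{\rm acc},Q_{\rm rej}\subset Q$, and $\delta:Q\times\Gamma\times S\times Q\times\{-1,0,+1\}\times\{\leftarrow,\downarrow,\rightarrow\}\to\mathbb{C}$ satisfying the well-formedness conditions below. For $\alpha,\beta\in\{-2,\dots,2\}$ let $W_{\alpha,\beta}(q_1,\sigma_1,s_1;q_2,\sigma_2,s_2)=\sum_{q'\in Q}\sum\overline{\delta(q_1,\sigma_1,s_1,q',c_1,d_1)}\,\delta(q_2,\sigma_2,s_2,q',c_2,d_2)$, inner sum over $(c_1,d_1),(c_2,d_2)$ with $c_2-c_1=\alpha$, $\mu(d_2)-\mu(d_1)=\beta$. Well-formedness: for all $q_1,q_2\in Q$, $\sigma,\sigma_1,\sigma_2\in\Gamma$, $s,s_1,s_2\in S$: (i) $W_{0,0}(q_1,\sigma,s;q_2,\sigma,s)=[q_1=q_2]$; (ii) $W_{0,\beta}(q_1,\sigma_1,s;q_2,\sigma_2,s)=0$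 for $\beta\in\{1,2\}$; (iii) $W_{\alpha,0}(q_1,\sigma,s_1;q_2,\sigma,s_2)=0$ for $\alpha\in\{1,2\}$; (iv) $W_{\alpha,\beta}(q_1,\sigma_1,s_1;q_2,\sigma_2,s_2)=0$ for $\alpha\in\{1,2\}$, $\beta\in\{-2,-1,1,2\}$. On input $x$ of length $n$ the circular tape holds $w_x=\cent x\$$ at positions $0,\dots,n+1$ (modulo $n+2$); configurations are $(q,a,b)\in Q\times\mathbb{Z}\times\{0,\dots,n+1\}$ and $U_x|q,a,b\rangle=\sum_{q',c,d}\delta(q,w_x(b),\mathrm{sign}(a),q',c,d)|q',a+c,b+\mu(d)\rangle$. Computation starts in $|q_0,0,0\rangle$; at each step $U_x$ is applied and then the state is measured w.r.t. the orthogonal decomposition into the spans of configurations whose state lies in $Q_{\rm acc}$, in $Q_{\rm rej}$, and in neither; outcomes "accept"/"reject" halt, otherwise the computation continues from the collapsed (renormalized) state. Acceptance (rejection) probability is the total probability of ever obtaining the outcome "accept" ("reject"). A 2R1CA is a 2Q1CA all of whose transition amplitudes lie in $\{0,1\}$. *)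

theory Defs
  imports "HOL-Analysis.Analysis"
begin

text \<open>Tape symbols: Gamma = Sigma plus the end-markers cent and dollar.
  The input alphabet Sigma is represented by the type 'a.\<close>
datatype 'a tsym = Cent | Dollar | Sym 'a

datatype dir = DL | DS | DR

fun mu :: "dir \<Rightarrow> int" where
  "mu DL = -1" | "mu DS = 0" | "mu DR = 1"

definition dirs :: "dir set" where "dirs = {DL, DS, DR}"
definition cdeltas :: "int set" where "cdeltas = {-1, 0, 1}"

text \<open>The counter-sign set S = {0,1} is represented by bool (False = 0, True = 1),
  and sign(k) is (k \<noteq> 0).\<close>
record 'a qca =
  qstates :: "nat set"
  qdelta :: "nat \<Rightarrow> 'a tsym \<Rightarrow> bool \<Rightarrow> nat \<Rightarrow> int \<Rightarrow> dir \<Rightarrow> complex"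
  qinit :: nat
  qacc :: "nat set"
  qrej :: "nat set"

definition Wsum :: "'a qca \<Rightarrow> int \<Rightarrow> int \<Rightarrow> nat \<Rightarrow> 'a tsym \<Rightarrow> bool \<Rightarrow> nat \<Rightarrow> 'a tsym \<Rightarrow> bool \<Rightarrow> complex" where
  "Wsum M \<alpha> \<beta> q1 \<sigma>1 s1 q2 \<sigma>2 s2 =
     (\<Sum>q'\<in>qstates M. \<Sum>c1\<in>cdeltas. \<Sum>d1\<in>dirs. \<Sum>c2\<in>cdeltas. \<Sum>d2\<in>dirs.
        if c2 - c1 = \<alpha> \<and> mu d2 - mu d1 = \<beta>
        then cnj (qdelta M q1 \<sigma>1 s1 q' c1 d1) * qdelta M q2 \<sigma>2 s2 q' c2 d2
        else 0)"

definition qca_struct :: "'a qca \<Rightarrow> bool" where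
  "qca_struct M \<longleftrightarrow>
     finite (qstates M) \<and> qinit M \<in> qstates M \<and>
     qacc M \<subseteq> qstates M \<and> qrej M \<subseteq> qstates M \<and> qacc M \<inter> qrej M = {} \<and>
     (\<forall>q \<sigma> s q' c d. qdelta M q \<sigma> s q' c d \<noteq> 0 \<longrightarrow>
        q \<in> qstates M \<and> q' \<in> qstates M \<and> c \<in> cdeltas)"

definition well_formed :: "'a qca \<Rightarrow> bool" where
  "well_formed M \<longleftrightarrow>
     (\<forall>q1\<in>qstates M. \<forall>q2\<in>qstates M.
       (\<forall>\<sigma> s. Wsum M 0 0 q1 \<sigma> s q2 \<sigma> s = (if q1 = q2 then 1 else 0)) \<and>
       (\<forall>\<beta>\<in>{1,2}. \<forall>\<sigma>1 \<sigma>2 s. Wsum M 0 \<beta> q1 \<sigma>1 s q2 \<sigma>2 s = 0) \<and>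
       (\<forall>\<alpha>\<in>{1,2}. \<forall>\<sigma> s1 s2. Wsum M \<alpha> 0 q1 \<sigma> s1 q2 \<sigma> s2 = 0) \<and>
       (\<forall>\<alpha>\<in>{1,2}. \<forall>\<beta>\<in>{-2,-1,1,2}. \<forall>\<sigma>1 \<sigma>2 s1 s2.
           Wsum M \<alpha> \<beta> q1 \<sigma>1 s1 q2 \<sigma>2 s2 = 0))"

definition is_2Q1CA :: "'a qca \<Rightarrow> bool" where
  "is_2Q1CA M \<longleftrightarrow> qca_struct M \<and> well_formed M"

definition is_2R1CA :: "'a qca \<Rightarrow> bool" where
  "is_2R1CA M \<longleftrightarrow> is_2Q1CA M \<and> (\<forall>q \<sigma> s q' c d. qdelta M q \<sigma> s q' c d \<in> {0, 1})"

text \<open>Circular tape content w_x = cent x dollar at positions 0..n+1.\<close>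
definition tape :: "'a list \<Rightarrow> int \<Rightarrow> 'a tsym" where
  "tape x b = (if b = 0 then Cent else if b = int (length x) + 1 then Dollar
               else Sym (x ! (nat b - 1)))"

text \<open>Configurations (q, a, b): state, counter value, head position in {0..n+1}.
  Vectors in the configuration space are functions to complex.\<close>
type_synonym conf = "nat \<times> int \<times> int"

definition Uop :: "'a qca \<Rightarrow> 'a list \<Rightarrow> (conf \<Rightarrow> complex) \<Rightarrow> conf \<Rightarrow> complex" where
  "Uop M x \<psi> = (\<lambda>(q', a', b').
     (\<Sum>q\<in>qstates M. \<Sum>c\<in>cdeltas. \<Sum>d\<in>dirs.
        \<Sum>b\<in>{bb \<in> {0..int (length x) + 1}. (bb + mu d) mod (int (length x) + 2) = b'}.
          \<psi> (q, a' - c, b) * qdelta M q (tape x b) (a' - c \<noteq> 0) q' c d))"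

definition proj :: "nat set \<Rightarrow> (conf \<Rightarrow> complex) \<Rightarrow> conf \<Rightarrow> complex" where
  "proj A \<psi> = (\<lambda>(q, a, b). if q \<in> A then \<psi> (q, a, b) else 0)"

definition nsq :: "(conf \<Rightarrow> complex) \<Rightarrow> real" where
  "nsq \<psi> = infsum (\<lambda>c. (cmod (\<psi> c))\<^sup>2) UNIV"

text \<open>Unnormalised non-halting state after t steps (measurement outcome
  "continue" obtained at each of the first t steps).\<close>
primrec psi :: "'a qca \<Rightarrow> 'a list \<Rightarrow> nat \<Rightarrow> conf \<Rightarrow> complex" where
  "psi M x 0 = (\<lambda>c. if c = (qinit M, 0, 0) then 1 else 0)"
| "psi M x (Suc t) = proj (- (qacc M \<union> qrej M)) (Uop M x (psi M x t))"

text \<open>Probability of outcome "accept" ("reject") exactly at step t+1.\<close>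
definition acc_step :: "'a qca \<Rightarrow> 'a list \<Rightarrow> nat \<Rightarrow> real" where
  "acc_step M x t = nsq (proj (qacc M) (Uop M x (psi M x t)))"

definition rej_step :: "'a qca \<Rightarrow> 'a list \<Rightarrow> nat \<Rightarrow> real" where
  "rej_step M x t = nsq (proj (qrej M) (Uop M x (psi M x t)))"

definition accepts_with_prob :: "'a qca \<Rightarrow> 'a list \<Rightarrow> real \<Rightarrow> bool" where
  "accepts_with_prob M x p \<longleftrightarrow> acc_step M x sums p"

definition rejects_with_prob :: "'a qca \<Rightarrow> 'a list \<Rightarrow> real \<Rightarrow> bool" where
  "rejects_with_prob M x p \<longleftrightarrow> rej_step M x sums p"

end

theory Submission
  imports Defs
begin


fun gl :: "unit tsym \<Rightarrow> bool \<Rightarrow> nat list" where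
  "gl Cent False = [1,0,2,3,4,5,6,7]"
| "gl Cent True = [0,1,2,3,4,5,6,7]"
| "gl (Sym u) True = [0,1,3,4,2,5,6,7]"
| "gl Dollar True = [0,2,3,4,1,5,6,7]"
| "gl (Sym u) False = [0,2,5,7,4,1,6,3]"
| "gl Dollar False = [0,1,7,6,4,5,2,3]"

definition gg :: "unit tsym \<Rightarrow> bool \<Rightarrow> nat \<Rightarrow> nat" where
  "gg \<sigma> s q = gl \<sigma> s ! q"

definition ac :: "nat \<Rightarrow> int" where
  "ac q = (if q = 1 then 1 else if q = 2 \<or> q = 3 then -1 else 0)"

definition ad :: "nat \<Rightarrow> dir" where
  "ad q = (if q = 1 then DR else if q = 4 \<or> q = 5 then DL else DS)"

definition Mach :: "unit qca" where
  "Mach = \<lparr> qstates = {0..<8},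
     qdelta = (\<lambda>q \<sigma> s q' c d. if q < 8 \<and> q' = gg \<sigma> s q \<and> c = ac q' \<and> d = ad q' then 1 else 0),
     qinit = 0, qacc = {6}, qrej = {7} \<rparr>"

lemma gl_len: "length (gl \<sigma> s) = 8"
  by (cases \<sigma>; cases s) auto

lemma gl_set: "x \<in> set (gl \<sigma> s) \<Longrightarrow> x < 8"
  by (cases \<sigma>; cases s) auto

lemma gl_dist: "distinct (gl \<sigma> s)"
  by (cases \<sigma>; cases s) auto

lemma gg_lt: "q < 8 \<Longrightarrow> gg \<sigma> s q < 8"
  unfolding gg_def using gl_set gl_len nth_mem by metis

lemma gg_inj: "q1 < 8 \<Longrightarrow> q2 < 8 \<Longrightarrow> gg \<sigma> s q1 = gg \<sigma> s q2 \<Longrightarrow> q1 = q2"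
  unfolding gg_def using gl_dist[of \<sigma> s] gl_len[of \<sigma> s] distinct_conv_nth by metis

lemma Mach_simps[simp]: "qstates Mach = {0..<8}" "qinit Mach = 0" "qacc Mach = {6}" "qrej Mach = {7}"
  "qdelta Mach q \<sigma> s q' c d = (if q < 8 \<and> q' = gg \<sigma> s q \<and> c = ac q' \<and> d = ad q' then 1 else 0)"
  by (simp_all add: Mach_def)

lemma ac_in: "ac q \<in> cdeltas" by (simp add: ac_def cdeltas_def)
lemma ad_in: "ad q \<in> dirs" by (simp add: ad_def dirs_def)
lemma fin_cd: "finite cdeltas" by (simp add: cdeltas_def)
lemma fin_dirs: "finite dirs" by (simp add: dirs_def)

lemma cnj_ind: "cnj (if A then 1 else 0) = (if A then 1 else 0)" by simp
lemma mult_ind: "(if A then 1 else 0) * (if B then 1 else 0) = (if A \<and> B then 1 else (0::complex))" by simp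
lemma if_ind: "(if C then (if D then 1 else 0) else 0) = (if C \<and> D then 1 else (0::complex))" by simp

lemma sum_ind: "finite S \<Longrightarrow> a \<in> S \<Longrightarrow> (\<Sum>x\<in>S. if x = a \<and> P then 1 else 0) = (if P then 1 else (0::complex))"
  by (cases P) (simp_all add: sum.delta)

lemma Wsum_Mach:
  assumes "q1 < 8" "q2 < 8"
  shows "Wsum Mach \<alpha> \<beta> q1 \<sigma>1 s1 q2 \<sigma>2 s2 =
     (if gg \<sigma>1 s1 q1 = gg \<sigma>2 s2 q2 \<and> \<alpha> = 0 \<and> \<beta> = 0 then 1 else 0)"
proof -
  have pt: "(if c2 - c1 = \<alpha> \<and> mu d2 - mu d1 = \<beta>
        then cnj (qdelta Mach q1 \<sigma>1 s1 q' c1 d1) * qdelta Mach q2 \<sigma>2 s2 q' c2 d2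
        else 0) =
      (if d2 = ad q' then (if c2 = ac q' then (if d1 = ad q' then (if c1 = ac q' then
         (if q' = gg \<sigma>1 s1 q1 \<and> gg \<sigma>1 s1 q1 = gg \<sigma>2 s2 q2 \<and> \<alpha> = 0 \<and> \<beta> = 0 then 1 else 0)
        else 0) else 0) else 0) else 0)" for q' c1 d1 c2 d2
  proof -
    have "(if c2 - c1 = \<alpha> \<and> mu d2 - mu d1 = \<beta>
        then cnj (qdelta Mach q1 \<sigma>1 s1 q' c1 d1) * qdelta Mach q2 \<sigma>2 s2 q' c2 d2
        else 0) = (if (c2 - c1 = \<alpha> \<and> mu d2 - mu d1 = \<beta>) \<and>
           (q1 < 8 \<and> q' = gg \<sigma>1 s1 q1 \<and> c1 = ac q' \<and> d1 = ad q') \<and>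
           (q2 < 8 \<and> q' = gg \<sigma>2 s2 q2 \<and> c2 = ac q' \<and> d2 = ad q') then 1 else 0)"
      by (simp only: Mach_simps cnj_ind mult_ind if_ind)
    also have "\<dots> = (if d2 = ad q' \<and> c2 = ac q' \<and> d1 = ad q' \<and> c1 = ac q' \<and>
         q' = gg \<sigma>1 s1 q1 \<and> gg \<sigma>1 s1 q1 = gg \<sigma>2 s2 q2 \<and> \<alpha> = 0 \<and> \<beta> = 0 then 1 else 0)"
      apply (rule if_cong) using assms by auto
    also have "\<dots> = (if d2 = ad q' then (if c2 = ac q' then (if d1 = ad q' then (if c1 = ac q' then
         (if q' = gg \<sigma>1 s1 q1 \<and> gg \<sigma>1 s1 q1 = gg \<sigma>2 s2 q2 \<and> \<alpha> = 0 \<and> \<beta> = 0 then 1 else 0)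
        else 0) else 0) else 0) else 0)"
      by simp
    finally show ?thesis .
  qed
  have "Wsum Mach \<alpha> \<beta> q1 \<sigma>1 s1 q2 \<sigma>2 s2 =
     (\<Sum>q'\<in>{0..<8}. if q' = gg \<sigma>1 s1 q1 \<and> gg \<sigma>1 s1 q1 = gg \<sigma>2 s2 q2 \<and> \<alpha> = 0 \<and> \<beta> = 0 then 1 else 0)"
    unfolding Wsum_def pt
    by (simp add: sum.delta fin_cd fin_dirs ac_in ad_in)
  also have "\<dots> = (if gg \<sigma>1 s1 q1 = gg \<sigma>2 s2 q2 \<and> \<alpha> = 0 \<and> \<beta> = 0 then 1 else 0)"
    using gg_lt[OF assms(1)] by (intro sum_ind) auto
  finally show ?thesis .
qed

lemma R1CA: "is_2R1CA Mach"
  unfolding is_2R1CA_def is_2Q1CA_def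
proof (intro conjI)
  show "qca_struct Mach"
    unfolding qca_struct_def by (auto simp: gg_lt ac_in split: if_splits)
  show "well_formed Mach"
    unfolding well_formed_def
    by (auto simp: Wsum_Mach dest: gg_inj)
  show "\<forall>q \<sigma> s q' c d. qdelta Mach q \<sigma> s q' c d \<in> {0, 1}"
    by simp
qed


definition stp :: "unit list \<Rightarrow> conf \<Rightarrow> conf" where
  "stp x C = (case C of (q, a, b) \<Rightarrow>
     (gg (tape x b) (a \<noteq> 0) q, a + ac (gg (tape x b) (a \<noteq> 0) q),
      (b + mu (ad (gg (tape x b) (a \<noteq> 0) q))) mod (int (length x) + 2)))"

definition ind :: "conf \<Rightarrow> conf \<Rightarrow> complex" where
  "ind C = (\<lambda>c. if c = C then 1 else 0)"

lemma sum_if_out: "(\<Sum>x\<in>S. if P then f x else 0) = (if P then sum f S else 0)"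
  by simp

lemma fin_B[simp]: "finite {bb. 0 \<le> bb \<and> bb \<le> (n::int) \<and> P bb}"
  by (rule finite_subset[of _ "{0..n}"]) auto

lemma Uop_ind_pt:
  assumes "q0 < 8" "0 \<le> b0" "b0 \<le> int (length x) + 1"
  shows "Uop Mach x (ind (q0, a0, b0)) (q', a', b') = ind (stp x (q0, a0, b0)) (q', a', b')"
proof -
  define G where "G = gg (tape x b0) (a0 \<noteq> 0) q0"
  have pt: "ind (q0, a0, b0) (q, a' - c, bb) * qdelta Mach q (tape x bb) (a' - c \<noteq> 0) q' c d =
    (if q = q0 then (if c = ac q' then (if d = ad q' then (if bb = b0 then
       (if q' = G \<and> a' - ac q' = a0 then 1 else 0) else 0) else 0) else 0) else 0)" for q c d bb
    using assms unfolding ind_def G_def by auto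
  have "Uop Mach x (ind (q0, a0, b0)) (q', a', b') = (\<Sum>q\<in>{0..<8}. \<Sum>c\<in>cdeltas. \<Sum>d\<in>dirs.
        \<Sum>bb\<in>{bb \<in> {0..int (length x) + 1}. (bb + mu d) mod (int (length x) + 2) = b'}.
    (if q = q0 then (if c = ac q' then (if d = ad q' then (if bb = b0 then
       (if q' = G \<and> a' - ac q' = a0 then 1 else 0) else 0) else 0) else 0) else 0))"
    by (simp only: Uop_def prod.case pt) simp
  then show ?thesis
    using assms
    by (simp add: sum_if_out sum.delta fin_cd fin_dirs ac_in ad_in stp_def ind_def G_def)
       (auto simp: ac_in)
qed

lemma Uop_ind:
  assumes "q0 < 8" "0 \<le> b0" "b0 \<le> int (length x) + 1"
  shows "Uop Mach x (ind (q0, a0, b0)) = ind (stp x (q0, a0, b0))"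
  using Uop_ind_pt[OF assms] by (intro ext) auto

lemma Uop_zero: "Uop Mach x (\<lambda>_. 0) = (\<lambda>_. 0)"
  by (intro ext) (auto simp: Uop_def)

lemma proj_ind: "proj A (ind C) = (if fst C \<in> A then ind C else (\<lambda>_. 0))"
  by (intro ext) (auto simp: proj_def ind_def)

lemma proj_zero: "proj A (\<lambda>_. 0) = (\<lambda>_. 0)"
  by (intro ext) (auto simp: proj_def)

lemma nsq_ind: "nsq (ind C) = 1"
proof -
  have "infsum (\<lambda>c. (cmod (ind C c))\<^sup>2) UNIV = infsum (\<lambda>c. 1::real) {C}"
    by (rule infsum_cong_neutral) (auto simp: ind_def)
  then show ?thesis unfolding nsq_def by simp
qed

lemma nsq_zero: "nsq (\<lambda>_. 0) = 0"
  unfolding nsq_def by (simp add: infsum_0)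

definition nh :: "unit list \<Rightarrow> conf \<Rightarrow> bool" where
  "nh x C = (case C of (q, a, b) \<Rightarrow> q < 6 \<and> 0 \<le> b \<and> b \<le> int (length x) + 1)"

definition run :: "unit list \<Rightarrow> nat \<Rightarrow> conf" where
  "run x t = (stp x ^^ t) (0, 0, 0)"

lemma run_Suc: "run x (Suc t) = stp x (run x t)"
  by (simp add: run_def)

lemma psi_run:
  assumes nhT: "\<forall>i\<le>T. nh x (run x i)" and halt: "fst (run x (Suc T)) \<in> {6, 7}"
  shows "psi Mach x t = (if t \<le> T then ind (run x t) else (\<lambda>_. 0))"
proof (induction t)
  case 0
  then show ?case by (auto simp: run_def ind_def)
next
  case (Suc t)
  show ?case
  proof (cases "t \<le> T")
    case True
    obtain q a b where r: "run x t = (q, a, b)" by (cases "run x t") auto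
    have "q < 6" "0 \<le> b" "b \<le> int (length x) + 1" using nhT True r by (auto simp: nh_def)
    then have U: "Uop Mach x (psi Mach x t) = ind (run x (Suc t))"
      using Suc True r by (simp add: Uop_ind run_Suc)
    show ?thesis
    proof (cases "Suc t \<le> T")
      case True
      obtain q2 a2 b2 where r2: "run x (Suc t) = (q2, a2, b2)" by (cases "run x (Suc t)") auto
      have "q2 < 6" using nhT True r2 by (auto simp: nh_def)
      then show ?thesis using True U r2 by (simp add: proj_ind)
    next
      case False
      then have "t = T" using \<open>t \<le> T\<close> by simp
      then show ?thesis using False U halt by (auto simp: proj_ind)
    qed
  next
    case False
    then show ?thesis using Suc by (simp add: Uop_zero proj_zero)
  qed
qed

lemma step_prob:
  assumes nhT: "\<forall>i\<le>T. nh x (run x i)" and halt: "fst (run x (Suc T)) \<in> {6, 7}"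
  shows "acc_step Mach x t = (if t = T \<and> fst (run x (Suc T)) = 6 then 1 else 0)"
    and "rej_step Mach x t = (if t = T \<and> fst (run x (Suc T)) = 7 then 1 else 0)"
proof -
  have U: "Uop Mach x (psi Mach x t) = (if t \<le> T then ind (run x (Suc t)) else (\<lambda>_. 0))"
  proof (cases "t \<le> T")
    case True
    obtain q a b where r: "run x t = (q, a, b)" by (cases "run x t") auto
    have "q < 6" "0 \<le> b" "b \<le> int (length x) + 1" using nhT True r by (auto simp: nh_def)
    then show ?thesis using True r psi_run[OF nhT halt, of t] by (simp add: Uop_ind run_Suc)
  next
    case False
    then show ?thesis using psi_run[OF nhT halt, of t] by (simp add: Uop_zero)
  qed
  have nh6: "fst (run x (Suc t)) \<notin> {6,7}" if "t < T"
  proof -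
    obtain q a b where r: "run x (Suc t) = (q, a, b)" by (cases "run x (Suc t)") auto
    then show ?thesis using nhT[rule_format, of "Suc t"] that by (auto simp: nh_def)
  qed
  show "acc_step Mach x t = (if t = T \<and> fst (run x (Suc T)) = 6 then 1 else 0)"
    unfolding acc_step_def U
    using nh6 by (cases "t < T"; cases "t = T") (auto simp: proj_ind proj_zero nsq_ind nsq_zero)
  show "rej_step Mach x t = (if t = T \<and> fst (run x (Suc T)) = 7 then 1 else 0)"
    unfolding rej_step_def U
    using nh6 by (cases "t < T"; cases "t = T") (auto simp: proj_ind proj_zero nsq_ind nsq_zero)
qed

lemma acc_one:
  assumes nhT: "\<forall>i\<le>T. nh x (run x i)" and halt: "fst (run x (Suc T)) = 6"
  shows "accepts_with_prob Mach x 1"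
proof -
  have "acc_step Mach x = (\<lambda>t. if t = T then (\<lambda>_. 1::real) t else 0)"
    using step_prob(1)[OF nhT] halt by (intro ext) auto
  then show ?thesis unfolding accepts_with_prob_def using sums_single[of T "\<lambda>_. 1::real"] by simp
qed

lemma rej_one:
  assumes nhT: "\<forall>i\<le>T. nh x (run x i)" and halt: "fst (run x (Suc T)) = 7"
  shows "rejects_with_prob Mach x 1"
proof -
  have "rej_step Mach x = (\<lambda>t. if t = T then (\<lambda>_. 1::real) t else 0)"
    using step_prob(2)[OF nhT] halt by (intro ext) auto
  then show ?thesis unfolding rejects_with_prob_def using sums_single[of T "\<lambda>_. 1::real"] by simp
qed


lemma tape_0: "tape x 0 = Cent" by (simp add: tape_def)
lemma tape_end: "tape x (int (length x) + 1) = Dollar" by (simp add: tape_def)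
lemma tape_mid: "1 \<le> b \<Longrightarrow> b \<le> int (length x) \<Longrightarrow> tape x b = Sym ()"
  by (simp add: tape_def)

lemma gg_simps:
  "gg Cent False 0 = 1"
  "gg (Sym u) True 1 = 1" "gg Dollar True 1 = 2"
  "gg (Sym u) True 2 = 3" "gg Dollar True 2 = 3"
  "gg (Sym u) False 2 = 5" "gg Dollar False 2 = 7"
  "gg (Sym u) True 3 = 4" "gg Dollar True 3 = 4"
  "gg Dollar False 3 = 6" "gg (Sym u) False 3 = 7"
  "gg (Sym u) True 4 = 2" "gg (Sym u) False 5 = 1"
  by (simp_all add: gg_def)

lemma ac_simps': "ac 1 = 1" "ac 2 = -1" "ac 3 = -1" "ac 4 = 0" "ac 5 = 0"
  by (simp_all add: ac_def)
lemma ad_simps: "ad 1 = DR" "ad 2 = DS" "ad 3 = DS" "ad 4 = DL" "ad 5 = DL"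
  by (simp_all add: ad_def)

lemmas ss = stp_def gg_def ac_def ad_def tape_0 tape_end tape_mid

lemma s0: "stp x (0, 0, 0) = (1, 1, 1)"
  by (simp add: ss mod_pos_pos_trivial)

lemma sRR: "1 \<le> p \<Longrightarrow> p \<le> int (length x) \<Longrightarrow> a \<noteq> 0 \<Longrightarrow> stp x (1, a, p) = (1, a + 1, p + 1)"
  by (simp add: ss mod_pos_pos_trivial)

lemma sRR_end: "a \<noteq> 0 \<Longrightarrow> stp x (1, a, int (length x) + 1) = (2, a - 1, int (length x) + 1)"
  by (simp add: ss mod_pos_pos_trivial)

lemma sD1: "1 \<le> p \<Longrightarrow> p \<le> int (length x) + 1 \<Longrightarrow> a \<noteq> 0 \<Longrightarrow> stp x (2, a, p) = (3, a - 1, p)"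
  by (cases "p = int (length x) + 1") (simp_all add: ss mod_pos_pos_trivial)

lemma sD1_z_mid: "1 \<le> p \<Longrightarrow> p \<le> int (length x) \<Longrightarrow> stp x (2, 0, p) = (5, 0, p - 1)"
  by (simp add: ss mod_pos_pos_trivial)

lemma sD1_z_end: "fst (stp x (2, 0, int (length x) + 1)) = 7"
  by (simp add: ss mod_pos_pos_trivial)

lemma sD2: "1 \<le> p \<Longrightarrow> p \<le> int (length x) + 1 \<Longrightarrow> a \<noteq> 0 \<Longrightarrow> stp x (3, a, p) = (4, a, p - 1)"
  by (cases "p = int (length x) + 1") (simp_all add: ss mod_pos_pos_trivial)

lemma sD2_z_end: "fst (stp x (3, 0, int (length x) + 1)) = 6"
  by (simp add: ss mod_pos_pos_trivial)

lemma sD2_z_mid: "1 \<le> p \<Longrightarrow> p \<le> int (length x) \<Longrightarrow> fst (stp x (3, 0, p)) = 7"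
  by (simp add: ss mod_pos_pos_trivial)

lemma sML: "1 \<le> p \<Longrightarrow> p \<le> int (length x) \<Longrightarrow> a \<noteq> 0 \<Longrightarrow> stp x (4, a, p) = (2, a - 1, p)"
  by (simp add: ss mod_pos_pos_trivial)

lemma sML': "1 \<le> p \<Longrightarrow> p \<le> int (length x) \<Longrightarrow> stp x (5, 0, p) = (1, 1, p + 1)"
  by (simp add: ss mod_pos_pos_trivial)


inductive reach :: "unit list \<Rightarrow> conf \<Rightarrow> conf \<Rightarrow> bool" for x where
  rrefl: "nh x C \<Longrightarrow> reach x C C"
| rstep: "nh x C \<Longrightarrow> reach x (stp x C) D \<Longrightarrow> reach x C D"

lemma reach_trans: "reach x C D \<Longrightarrow> reach x D E \<Longrightarrow> reach x C E"
  by (induction rule: reach.induct) (auto intro: rstep)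

lemma reach_step: "nh x C \<Longrightarrow> stp x C = C' \<Longrightarrow> reach x C' D \<Longrightarrow> reach x C D"
  using rstep by blast

lemma reach_iter: "reach x C D \<Longrightarrow> \<exists>k. (stp x ^^ k) C = D \<and> (\<forall>i\<le>k. nh x ((stp x ^^ i) C))"
proof (induction rule: reach.induct)
  case (rrefl C)
  then show ?case by (intro exI[of _ 0]) auto
next
  case (rstep C D)
  then obtain k where k: "(stp x ^^ k) (stp x C) = D" "\<forall>i\<le>k. nh x ((stp x ^^ i) (stp x C))" by blast
  show ?case
  proof (intro exI[of _ "Suc k"] conjI allI impI)
    show "(stp x ^^ Suc k) C = D" using k(1) by (simp add: funpow_Suc_right del: funpow.simps)
    fix i assume "i \<le> Suc k"
    then show "nh x ((stp x ^^ i) C)"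
    proof (cases i)
      case 0 then show ?thesis using rstep by simp
    next
      case (Suc j)
      then show ?thesis using k(2) \<open>i \<le> Suc k\<close> by (simp add: funpow_Suc_right del: funpow.simps)
    qed
  qed
qed

lemma nhI: "q < 6 \<Longrightarrow> 0 \<le> b \<Longrightarrow> b \<le> int (length x) + 1 \<Longrightarrow> nh x (q, a, b)"
  by (simp add: nh_def)

lemma L_RR:
  "1 \<le> p \<Longrightarrow> p \<le> int (length x) + 1 \<Longrightarrow> a \<ge> 1 \<Longrightarrow>
   reach x (1, a, p) (1, a + (int (length x) + 1 - p), int (length x) + 1)"
proof (induction "nat (int (length x) + 1 - p)" arbitrary: a p)
  case 0
  then have "p = int (length x) + 1" by simp
  then have p: "p = int (length x) + 1" by simp
  have "reach x (1, a, p) (1, a, p)" by (rule rrefl, rule nhI) (use p in auto)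
  then show ?case using p by simp
next
  case (Suc n)
  then have p: "p \<le> int (length x)" by simp
  have IH: "reach x (1, a + 1, p + 1) (1, (a + 1) + (int (length x) + 1 - (p + 1)), int (length x) + 1)"
    using Suc p by (intro Suc.hyps) auto
  have e: "(a + 1) + (int (length x) + 1 - (p + 1)) = a + (int (length x) + 1 - p)" by simp
  show ?case
    by (rule reach_step[OF _ sRR[OF Suc.prems(1) p]]) (use Suc.prems IH[unfolded e] in \<open>auto intro: nhI\<close>)
qed

lemma L_D:
  "2 * int j \<le> r \<Longrightarrow> p - int j \<ge> 1 \<Longrightarrow> p \<le> int (length x) + 1 \<Longrightarrow>
   reach x (2, r, p) (2, r - 2 * int j, p - int j)"
proof (induction j arbitrary: r p)
  case 0
  then show ?case by simp (intro rrefl nhI, auto)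
next
  case (Suc j)
  have IH: "reach x (2, r - 2, p - 1) (2, r - 2 - 2 * int j, p - 1 - int j)"
    using Suc by (intro Suc.IH) auto
  have e: "(2::nat, r - 2 - 2 * int j, p - 1 - int j) = (2, r - 2 * int (Suc j), p - int (Suc j))"
    by simp
  have s1: "stp x (2, r, p) = (3, r - 1, p)" using Suc.prems by (intro sD1) auto
  have s2: "stp x (3, r - 1, p) = (4, r - 1, p - 1)" using Suc.prems by (intro sD2) auto
  have s3: "stp x (4, r - 1, p - 1) = (2, r - 2, p - 1)" using Suc.prems sML[of "p - 1" x "r - 1"] by auto
  show ?case
    apply (rule reach_step[OF _ s1])
     apply (use Suc.prems in \<open>auto intro: nhI\<close>)[1]
    apply (rule reach_step[OF _ s2])
     apply (use Suc.prems in \<open>auto intro: nhI\<close>)[1]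
    apply (rule reach_step[OF _ s3])
     apply (use Suc.prems in \<open>auto intro: nhI\<close>)[1]
    using IH e by simp
qed

lemma pow2_odd: "odd (k::nat) \<Longrightarrow> (\<exists>n. k = 2 ^ n) \<longleftrightarrow> k = 1"
  by (metis dvd_power even_numeral gr0I power_0)

lemma pow2_even: "even (k::nat) \<Longrightarrow> (\<exists>n. k = 2 ^ n) \<longleftrightarrow> k > 0 \<and> (\<exists>n. k div 2 = 2 ^ n)"
proof
  assume e: "even k" and "\<exists>n. k = 2 ^ n"
  then obtain n where n: "k = 2 ^ n" by blast
  have "n \<noteq> 0" using e n by auto
  then obtain n' where "n = Suc n'" by (cases n) auto
  then show "k > 0 \<and> (\<exists>n. k div 2 = 2 ^ n)" using n by auto
next
  assume e: "even k" and "k > 0 \<and> (\<exists>n. k div 2 = 2 ^ n)"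
  then obtain n where n: "k div 2 = 2 ^ n" by blast
  then have "k = 2 ^ Suc n" using e by (metis dvd_mult_div_cancel power_Suc)
  then show "\<exists>n. k = 2 ^ n" by blast
qed

lemma main_loop:
  "k \<le> length x \<Longrightarrow> \<exists>D. reach x (2, int k, int (length x) + 1) D \<and>
     fst (stp x D) = (if (\<exists>n. k = 2 ^ n) then 6 else 7)"
proof (induction k rule: less_induct)
  case (less k)
  define M where "M = int (length x)"
  define j where "j = k div 2"
  show ?case
  proof (cases "even k")
    case True
    then have kj: "int k = 2 * int j" unfolding j_def by auto
    show ?thesis
    proof (cases "k = 0")
      case True
      then show ?thesis using sD1_z_end[of x] by (intro exI[of _ "(2, 0, M + 1)"]) (auto simp: M_def intro!: rrefl nhI)
    next
      case False
      then have j1: "j \<ge> 1" "j < k" "j \<le> length x - 1" using True less.prems unfolding j_def by auto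
      have r1: "reach x (2, int k, M + 1) (2, 0, M + 1 - int j)"
        using L_D[of j "int k" "M + 1" x] kj j1 less.prems by (auto simp: M_def)
      obtain D where D: "reach x (2, int j, M + 1) D" "fst (stp x D) = (if (\<exists>n. j = 2 ^ n) then 6 else 7)"
        using less.IH[of j] j1 less.prems by (auto simp: M_def)
      have a: "stp x (2, 0, M + 1 - int j) = (5, 0, M - int j)"
        using sD1_z_mid[of "M + 1 - int j" x] j1 less.prems by (auto simp: M_def)
      have b: "stp x (5, 0, M - int j) = (1, 1, M - int j + 1)"
        using sML'[of "M - int j" x] j1 less.prems by (auto simp: M_def)
      have c: "reach x (1, 1, M - int j + 1) (1, 1 + int j, M + 1)"
        using L_RR[of "M - int j + 1" x 1] j1 less.prems by (auto simp: M_def)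
      have d: "stp x (1, 1 + int j, M + 1) = (2, int j, M + 1)"
        using sRR_end[of "1 + int j" x] by (auto simp: M_def)
      have "reach x (2, 0, M + 1 - int j) D"
        apply (rule reach_step[OF _ a])
         apply (use j1 less.prems in \<open>auto simp: M_def intro: nhI\<close>)[1]
        apply (rule reach_step[OF _ b])
         apply (use j1 less.prems in \<open>auto simp: M_def intro: nhI\<close>)[1]
        apply (rule reach_trans[OF c])
        apply (rule reach_step[OF _ d])
         apply (use j1 less.prems in \<open>auto simp: M_def intro: nhI\<close>)[1]
        by (rule D(1))
      then have "reach x (2, int k, M + 1) D" using r1 reach_trans by blast
      moreover have iff: "(\<exists>n. k = 2 ^ n) \<longleftrightarrow> (\<exists>n. j = 2 ^ n)"
        using pow2_even[OF True] False by (simp add: j_def)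
      have "fst (stp x D) = (if (\<exists>n. k = 2 ^ n) then 6 else 7)"
        using D(2) iff by simp
      ultimately show ?thesis by (intro exI[of _ D] conjI) (simp_all add: M_def)
    qed
  next
    case False
    then have "k = 2 * j + 1" unfolding j_def by presburger
    then have kj: "int k = 2 * int j + 1" by simp
    have r1: "reach x (2, int k, M + 1) (2, 1, M + 1 - int j)"
      using L_D[of j "int k" "M + 1" x] kj less.prems unfolding j_def by (auto simp: M_def)
    have a: "stp x (2, 1, M + 1 - int j) = (3, 0, M + 1 - int j)"
      using sD1[of "M + 1 - int j" x 1] less.prems unfolding j_def by (auto simp: M_def)
    have r2: "reach x (2, int k, M + 1) (3, 0, M + 1 - int j)"
      apply (rule reach_trans[OF r1])
      apply (rule reach_step[OF _ a])
       apply (rule nhI) using less.prems apply (auto simp: M_def j_def)[3]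
      apply (rule rrefl, rule nhI) using less.prems by (auto simp: M_def j_def)
    show ?thesis
    proof (cases "j = 0")
      case True
      then have "k = 1" using False unfolding j_def by presburger
      then have "fst (stp x (3, 0, M + 1 - int j)) = (if (\<exists>n. k = 2 ^ n) then 6 else 7)"
        using sD2_z_end[of x] True by (simp add: M_def) (rule exI[of _ 0], simp)
      then show ?thesis using r2 by (intro exI[of _ "(3, 0, M + 1 - int j)"] conjI) (simp_all add: M_def)
    next
      case j0: False
      then have "k \<noteq> 1" unfolding j_def by auto
      moreover have "fst (stp x (3, 0, M + 1 - int j)) = 7"
        using sD2_z_mid[of "M + 1 - int j" x] j0 less.prems unfolding j_def by (auto simp: M_def)
      ultimately have "fst (stp x (3, 0, M + 1 - int j)) = (if (\<exists>n. k = 2 ^ n) then 6 else 7)"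
        using pow2_odd[OF False] by simp
      then show ?thesis using r2 by (intro exI[of _ "(3, 0, M + 1 - int j)"] conjI) (simp_all add: M_def)
    qed
  qed
qed

lemma full_run:
  "\<exists>D. reach x (0, 0, 0) D \<and> fst (stp x D) = (if (\<exists>n. length x = 2 ^ n) then 6 else 7)"
proof -
  obtain D where D: "reach x (2, int (length x), int (length x) + 1) D"
     "fst (stp x D) = (if (\<exists>n. length x = 2 ^ n) then 6 else 7)"
    using main_loop[of "length x" x] by auto
  have c: "reach x (1, 1, 1) (1, 1 + int (length x), int (length x) + 1)"
    using L_RR[of 1 x 1] by simp
  have d: "stp x (1, 1 + int (length x), int (length x) + 1) = (2, int (length x), int (length x) + 1)"
    using sRR_end[of "1 + int (length x)" x] by simp
  have "reach x (0, 0, 0) D"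
    apply (rule reach_step[OF _ s0])
     apply (simp add: nhI)
    apply (rule reach_trans[OF c])
    apply (rule reach_step[OF _ d])
     apply (simp add: nhI)
    by (rule D(1))
  then show ?thesis using D(2) by blast
qed

theorem lemma16:
  shows "\<exists>M :: unit qca. is_2R1CA M \<and>
     (\<forall>x :: unit list.
        ((\<exists>n::nat. length x = 2 ^ n) \<longrightarrow> accepts_with_prob M x 1) \<and>
        (\<not> (\<exists>n::nat. length x = 2 ^ n) \<longrightarrow> rejects_with_prob M x 1))"
proof (intro exI[of _ Mach] conjI allI impI)
  show "is_2R1CA Mach" by (rule R1CA)
next
  fix x :: "unit list"
  obtain D where D: "reach x (0, 0, 0) D" "fst (stp x D) = (if (\<exists>n. length x = 2 ^ n) then 6 else 7)"
    using full_run by blast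
  obtain k where k: "(stp x ^^ k) (0, 0, 0) = D" "\<forall>i\<le>k. nh x ((stp x ^^ i) (0, 0, 0))"
    using reach_iter[OF D(1)] by blast
  have nhT: "\<forall>i\<le>k. nh x (run x i)" using k(2) by (simp add: run_def)
  have h: "run x (Suc k) = stp x D" using k(1) by (simp add: run_def)
  {
    assume "\<exists>n. length x = 2 ^ n"
    then show "accepts_with_prob Mach x 1" using acc_one[OF nhT] h D(2) by simp
  next
    assume "\<not> (\<exists>n. length x = 2 ^ n)"
    then show "rejects_with_prob Mach x 1" using rej_one[OF nhT] h D(2) by simp
  }
qed


end
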